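(* Let $H\in(0,1)$, $\sigma$ a real $n\times n$ matrix, $B$ an $n$-dimensional fBm with Hurst parameter $H$, and let $Z$ be the fractional Ornstein–Uhlenbeck process $dZ_t=-Z_t\,dt+\sigma\,dB_t$, $Z_0=0$. For every $\kappa>0$ there are $c,C>0$ such that $$\sup_{T\ge0}\mathbb{P}\big(\|Z\|_{\mathcal{N}_\kappa([0,T])}>|z|\big)\le Ce^{-c|z|^2}\qquad\forall\,z\in\mathbb{R}^n.$$
   Context: For $\kappa,T>0$ and $f:[0,T]\to\mathbb{R}^n$, $\|f\|_{\mathcal{N}_\kappa([0,T])}=\big(\int_0^Te^{-\kappa(T-s)}|f(s)|^2ds\big)^{1/2}$. *)

theory Defs
  imports "HOL-Probability.Probability"
begin

definition centered_gaussian :: "'a measure \<Rightarrow> ('a \<Rightarrow> real) \<Rightarrow> real \<Rightarrow> bool" where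
  "centered_gaussian M X v \<longleftrightarrow>
     X \<in> borel_measurable M \<and>
     ((v = 0 \<and> (AE \<omega> in M. X \<omega> = 0)) \<or>
      (v > 0 \<and> distributed M lborel X (\<lambda>x. ennreal (normal_density 0 (sqrt v) x))))"

definition fbm_cov :: "real \<Rightarrow> real \<Rightarrow> real \<Rightarrow> real" where
  "fbm_cov H s t = (s powr (2*H) + t powr (2*H) - \<bar>t - s\<bar> powr (2*H)) / 2"

text \<open>B is an n-dimensional fractional Brownian motion on [0,\<infinity>) with Hurst parameter H
  under the probability measure M: a centred Gaussian process (every finite linear
  combination of coordinates B_t^j is centred Gaussian) with covariance
  E[B_s^i B_t^j] = \<delta>_ij R_H(s,t), i.e. n independent one-dimensional fBms,
  with continuous sample paths.\<close>
definition is_fbm :: "'a measure \<Rightarrow> real \<Rightarrow> (real \<Rightarrow> 'a \<Rightarrow> real ^ 'n) \<Rightarrow> bool" where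
  "is_fbm M H B \<longleftrightarrow>
     prob_space M \<and>
     (\<forall>t\<ge>0. B t \<in> borel_measurable M) \<and>
     (\<forall>\<omega>\<in>space M. continuous_on {0..} (\<lambda>t. B t \<omega>)) \<and>
     (\<forall>(S::nat set) (tt::nat \<Rightarrow> real) (jj::nat \<Rightarrow> 'n) (a::nat \<Rightarrow> real).
        finite S \<longrightarrow> (\<forall>k\<in>S. tt k \<ge> 0) \<longrightarrow>
        centered_gaussian M (\<lambda>\<omega>. \<Sum>k\<in>S. a k * (B (tt k) \<omega> $ jj k))
          (\<Sum>k\<in>S. \<Sum>l\<in>S. if jj k = jj l then a k * a l * fbm_cov H (tt k) (tt l) else 0))"

definition N_norm :: "real \<Rightarrow> real \<Rightarrow> (real \<Rightarrow> real ^ 'n) \<Rightarrow> real" where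
  "N_norm \<kappa> T f = sqrt (integral {0..T} (\<lambda>s. exp (- \<kappa> * (T - s)) * (norm (f s))\<^sup>2))"

end

theory Submission
  imports Defs
begin

lemma gauss_moment:
  assumes P: "prob_space M" and G: "centered_gaussian M X v" and c: "0 \<le> c" "c * v \<le> 1/4"
  shows "(\<integral>\<^sup>+\<omega>. ennreal (exp (c * (X \<omega>)\<^sup>2)) \<partial>M) \<le> 2"
proof -
  interpret prob_space M by (rule P)
  have Xm: "X \<in> borel_measurable M" using G unfolding centered_gaussian_def by blast
  consider "v = 0" "AE \<omega> in M. X \<omega> = 0" | "v > 0" "distributed M lborel X (\<lambda>x. ennreal (normal_density 0 (sqrt v) x))"
    using G unfolding centered_gaussian_def by blast
  then show ?thesis
  proof cases
    case 1
    have "(\<integral>\<^sup>+\<omega>. ennreal (exp (c * (X \<omega>)\<^sup>2)) \<partial>M) = (\<integral>\<^sup>+\<omega>. 1 \<partial>M)"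
      by (rule nn_integral_cong_AE) (use 1(2) in auto)
    also have "\<dots> = 1" using emeasure_space_1 by simp
    finally show ?thesis by simp
  next
    case 2
    define a where "a = 1 - 2 * c * v"
    have a: "a \<ge> 1/2" using c unfolding a_def by simp
    have "(\<integral>\<^sup>+\<omega>. ennreal (exp (c * (X \<omega>)\<^sup>2)) \<partial>M)
        = (\<integral>\<^sup>+x. ennreal (normal_density 0 (sqrt v) x) * ennreal (exp (c * x\<^sup>2)) \<partial>lborel)"
      by (rule distributed_nn_integral[OF 2(2), symmetric]) simp
    also have "\<dots> = (\<integral>\<^sup>+x. ennreal (1 / sqrt a) * ennreal (normal_density 0 (sqrt (v / a)) x) \<partial>lborel)"
    proof (rule nn_integral_cong)
      fix x :: real
      have "normal_density 0 (sqrt v) x * exp (c * x\<^sup>2) = 1 / sqrt a * normal_density 0 (sqrt (v / a)) x"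
      proof -
        have e: "exp (-(x - 0)\<^sup>2 / (2 * (sqrt v)\<^sup>2)) * exp (c * x\<^sup>2) = exp (-(x - 0)\<^sup>2 / (2 * (sqrt (v / a))\<^sup>2))"
        proof -
          have "-(x - 0)\<^sup>2 / (2 * (sqrt v)\<^sup>2) + c * x\<^sup>2 = -(x - 0)\<^sup>2 / (2 * (sqrt (v / a))\<^sup>2)"
            using 2(1) a by (simp add: a_def field_simps)
          then show ?thesis by (simp add: exp_add[symmetric])
        qed
        have s: "1 / sqrt (2 * pi * (sqrt v)\<^sup>2) = 1 / sqrt a * (1 / sqrt (2 * pi * (sqrt (v / a))\<^sup>2))"
          using 2(1) a by (simp add: real_sqrt_divide real_sqrt_mult field_simps)
        have "1 / sqrt (2 * pi * (sqrt v)\<^sup>2) * exp (-(x - 0)\<^sup>2 / (2 * (sqrt v)\<^sup>2)) * exp (c * x\<^sup>2)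
           = 1 / sqrt a * (1 / sqrt (2 * pi * (sqrt (v / a))\<^sup>2) * exp (-(x - 0)\<^sup>2 / (2 * (sqrt (v / a))\<^sup>2)))"
          by (subst s) (simp only: mult.assoc e)
        then show ?thesis unfolding normal_density_def .
      qed
      note eq = this
      have "ennreal (normal_density 0 (sqrt v) x) * ennreal (exp (c * x\<^sup>2)) = ennreal (normal_density 0 (sqrt v) x * exp (c * x\<^sup>2))"
        by (rule ennreal_mult[symmetric]) auto
      also have "\<dots> = ennreal (1 / sqrt a * normal_density 0 (sqrt (v / a)) x)" using eq by simp
      also have "\<dots> = ennreal (1 / sqrt a) * ennreal (normal_density 0 (sqrt (v / a)) x)"
        by (rule ennreal_mult) (use a in auto)
      finally show "ennreal (normal_density 0 (sqrt v) x) * ennreal (exp (c * x\<^sup>2)) =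
          ennreal (1 / sqrt a) * ennreal (normal_density 0 (sqrt (v / a)) x)" .
    qed
    also have "\<dots> = ennreal (1 / sqrt a) * (\<integral>\<^sup>+x. ennreal (normal_density 0 (sqrt (v / a)) x) \<partial>lborel)"
      by (rule nn_integral_cmult) simp
    also have "(\<integral>\<^sup>+x. ennreal (normal_density 0 (sqrt (v / a)) x) \<partial>lborel) = 1"
    proof -
      interpret N: prob_space "density lborel (normal_density 0 (sqrt (v / a)))"
        by (rule prob_space_normal_density) (use 2(1) a in simp)
      show ?thesis using N.emeasure_space_1 by (simp add: emeasure_density)
    qed
    also have "ennreal (1 / sqrt a) * 1 \<le> 2"
    proof -
      have "sqrt a \<ge> 1/2" using a by (intro real_le_rsqrt) (simp add: power2_eq_square)
      then have "1 / sqrt a \<le> 2" using a by (simp add: field_simps)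
      then show ?thesis by (metis ennreal_leI ennreal_numeral mult_1_right)
    qed
    finally show ?thesis .
  qed
qed


lemma exp_hasint:
  fixes c d s t :: real
  assumes "c \<noteq> 0" "s \<le> t"
  shows "((\<lambda>u. exp (c * u + d)) has_integral (exp (c * t + d) - exp (c * s + d)) / c) {s..t}"
proof -
  have "((\<lambda>u. exp (c * u + d) / c) has_vector_derivative exp (c * u + d)) (at u within {s..t})" for u
  proof -
    have "((\<lambda>u. exp (c * u + d) / c) has_real_derivative (exp (c * u + d) * c) / c) (at u within {s..t})"
      by (auto intro!: derivative_eq_intros)
    then show ?thesis using assms(1) by (simp add: has_real_derivative_iff_has_vector_derivative)
  qed
  from fundamental_theorem_of_calculus[OF assms(2) this]
  show ?thesis by (simp add: diff_divide_distrib)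
qed

lemma ode_solution:
  fixes z b :: "real \<Rightarrow> 'v::euclidean_space"
  assumes zc: "continuous_on {0..} z" and bc: "continuous_on {0..} b"
    and eq: "\<forall>t\<ge>0. z t = b t - integral {0..t} z" and t: "t \<ge> 0"
  shows "z t = exp (-t) *\<^sub>R b t + integral {0..t} (\<lambda>u. exp (-(t-u)) *\<^sub>R (b t - b u))"
proof -
  have zc': "continuous_on {0..t} z" using zc by (rule continuous_on_subset) auto
  have bc': "continuous_on {0..t} b" using bc by (rule continuous_on_subset) auto
  have ebc: "continuous_on {0..t} (\<lambda>u. exp u *\<^sub>R b u)"
    by (intro continuous_intros bc')
  define Y where "Y s = integral {0..s} z" for s
  define \<Phi> where "\<Phi> s = exp s *\<^sub>R Y s - integral {0..s} (\<lambda>u. exp u *\<^sub>R b u)" for s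
  have D: "(\<Phi> has_vector_derivative 0) (at s within {0..t})" if s: "s \<in> {0..t}" for s
  proof -
    have dY: "(Y has_vector_derivative z s) (at s within {0..t})"
      unfolding Y_def by (rule integral_has_vector_derivative[OF zc' s])
    have dI: "((\<lambda>s. integral {0..s} (\<lambda>u. exp u *\<^sub>R b u)) has_vector_derivative exp s *\<^sub>R b s) (at s within {0..t})"
      by (rule integral_has_vector_derivative[OF ebc s])
    have dE: "(exp has_field_derivative exp s) (at s within {0..t})"
      by (auto intro!: derivative_eq_intros)
    have "(\<Phi> has_vector_derivative (exp s *\<^sub>R z s + exp s *\<^sub>R Y s) - exp s *\<^sub>R b s) (at s within {0..t})"
      unfolding \<Phi>_def by (intro has_vector_derivative_diff has_vector_derivative_scaleR dE dY dI)
    moreover have "(exp s *\<^sub>R z s + exp s *\<^sub>R Y s) - exp s *\<^sub>R b s = 0"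
      using eq s unfolding Y_def by (simp add: algebra_simps scaleR_add_right[symmetric])
    ultimately show ?thesis by simp
  qed
  have cv: "convex {0..t::real}" by (rule convex_real_interval)
  obtain c where c: "\<And>s. s \<in> {0..t} \<Longrightarrow> \<Phi> s = c"
    using has_vector_derivative_zero_constant[OF cv D] by metis
  have "\<Phi> t = \<Phi> 0" using c t by auto
  also have "\<Phi> 0 = 0" unfolding \<Phi>_def Y_def by simp
  finally have "exp t *\<^sub>R Y t = integral {0..t} (\<lambda>u. exp u *\<^sub>R b u)" unfolding \<Phi>_def by simp
  then have "Y t = exp (-t) *\<^sub>R integral {0..t} (\<lambda>u. exp u *\<^sub>R b u)"
  proof -
    have "Y t = exp (-t) *\<^sub>R (exp t *\<^sub>R Y t)" by (simp add: scaleR_scaleR flip: exp_add)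
    then show ?thesis using \<open>exp t *\<^sub>R Y t = _\<close> by simp
  qed
  also have "\<dots> = integral {0..t} (\<lambda>u. exp (-(t-u)) *\<^sub>R b u)"
  proof -
    have "exp (-t) *\<^sub>R integral {0..t} (\<lambda>u. exp u *\<^sub>R b u) = integral {0..t} (\<lambda>u. exp (-t) *\<^sub>R (exp u *\<^sub>R b u))"
      by (rule integral_cmul[symmetric])
    also have "(\<lambda>u. exp (-t) *\<^sub>R (exp u *\<^sub>R b u)) = (\<lambda>u. exp (-(t-u)) *\<^sub>R b u)"
      by (rule ext) (simp add: scaleR_scaleR flip: exp_add)
    finally show ?thesis .
  qed
  finally have Yt: "Y t = integral {0..t} (\<lambda>u. exp (-(t-u)) *\<^sub>R b u)" .
  have ic1: "(\<lambda>u. exp (-(t-u)) *\<^sub>R b u) integrable_on {0..t}"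
    by (intro integrable_continuous_interval continuous_intros bc')
  have ic2: "(\<lambda>u. exp (-(t-u)) *\<^sub>R b t) integrable_on {0..t}"
    by (intro integrable_continuous_interval continuous_intros)
  have hi: "((\<lambda>u. exp (-(t-u))) has_integral (1 - exp (-t))) {0..t}"
  proof -
    have "((\<lambda>u. exp (1 * u + (-t))) has_integral (exp (1 * t + (-t)) - exp (1 * 0 + (-t))) / 1) {0..t}"
      by (rule exp_hasint) (use t in auto)
    then show ?thesis by simp
  qed
  have "integral {0..t} (\<lambda>u. exp (-(t-u)) *\<^sub>R (b t - b u))
      = integral {0..t} (\<lambda>u. exp (-(t-u)) *\<^sub>R b t) - integral {0..t} (\<lambda>u. exp (-(t-u)) *\<^sub>R b u)"
    unfolding scaleR_diff_right by (rule integral_diff[OF ic2 ic1])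
  also have "integral {0..t} (\<lambda>u. exp (-(t-u)) *\<^sub>R b t) = (1 - exp (-t)) *\<^sub>R b t"
    by (rule integral_unique[OF has_integral_scaleR_left[OF hi]])
  finally have F: "integral {0..t} (\<lambda>u. exp (-(t-u)) *\<^sub>R (b t - b u)) = (1 - exp (-t)) *\<^sub>R b t - integral {0..t} (\<lambda>u. exp (-(t-u)) *\<^sub>R b u)" .
  have Z: "z t = b t - integral {0..t} (\<lambda>u. exp (-(t-u)) *\<^sub>R b u)"
    using eq t Yt unfolding Y_def by (metis eq_diff_eq)
  show ?thesis unfolding F Z by (simp add: algebra_simps)
qed


lemma pred_in_Icc[measurable (raw)]:
  fixes f g h :: "'b \<Rightarrow> real"
  assumes [measurable]: "f \<in> borel_measurable M" "g \<in> borel_measurable M" "h \<in> borel_measurable M"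
  shows "Measurable.pred M (\<lambda>x. f x \<in> {g x..h x})"
  unfolding atLeastAtMost_iff by measurable

lemma test_meas:
  fixes Bp :: "real \<Rightarrow> real^'n"
  assumes [measurable]: "Bp \<in> borel_measurable borel"
  shows "(\<lambda>s. \<integral>\<^sup>+u. ennreal (indicator {0..s} u * exp (-(s-u)/2) / 2) * ennreal (c * exp (-\<bar>s-u\<bar>/2) * (norm (Bp s - Bp u))\<^sup>2) \<partial>lborel) \<in> borel_measurable lborel"
  by measurable

definition EE :: "ennreal \<Rightarrow> ennreal" where
  "EE x = (if x = \<top> then \<top> else ennreal (exp (enn2real x)))"

lemma EE_ennreal[simp]: "r \<ge> 0 \<Longrightarrow> EE (ennreal r) = ennreal (exp r)"
  by (simp add: EE_def)

lemma EE_top[simp]: "EE \<top> = \<top>" by (simp add: EE_def)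

lemma EE_ge: "x \<le> EE x"
proof (cases x)
  case (real r) then show ?thesis
    by (simp add: ennreal_leI) (smt (verit) exp_ge_add_one_self)
qed simp

lemma EE_mono: "x \<le> y \<Longrightarrow> EE x \<le> EE y"
proof (cases y)
  case (real s)
  assume "x \<le> y"
  then obtain r where "x = ennreal r" "r \<ge> 0" "r \<le> s"
    using real by (metis ennreal_cases ennreal_le_iff ennreal_neq_top top.extremum_uniqueI)
  then show ?thesis using real by (simp add: ennreal_leI)
qed simp

lemma EE_meas[measurable]: "EE \<in> borel_measurable borel"
  unfolding EE_def by measurable

lemma EE_meas'[measurable (raw)]: "f \<in> borel_measurable M \<Longrightarrow> (\<lambda>x. EE (f x)) \<in> borel_measurable M"
  by (rule measurable_compose[OF _ EE_meas])

lemma EE_tangent: "ennreal (exp r) * (y + 1) \<le> EE y + ennreal (exp r * r)" if r: "r \<ge> 0" for y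
proof (cases y)
  case (real t)
  have "exp r * (t + 1) \<le> exp t + exp r * r"
  proof -
    have "1 + (t - r) \<le> exp (t - r)" by (rule exp_ge_add_one_self)
    then have "exp r * (1 + (t - r)) \<le> exp r * exp (t - r)" by (intro mult_left_mono) auto
    also have "exp r * exp (t - r) = exp t" by (simp flip: exp_add)
    finally show ?thesis by (simp add: algebra_simps)
  qed
  moreover have "ennreal t + 1 = ennreal (t + 1)" using real by (subst ennreal_plus) auto
  moreover have "ennreal (exp r) * ennreal (t + 1) = ennreal (exp r * (t + 1))" using real by (subst ennreal_mult) auto
  moreover have "EE y + ennreal (exp r * r) = ennreal (exp t + exp r * r)" using real r by (subst ennreal_plus) auto
  ultimately show ?thesis using real by (simp add: ennreal_leI)
qed simp

lemma pathJ:
  fixes q :: "real \<Rightarrow> real" and f :: "real \<Rightarrow> ennreal"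
  assumes [measurable]: "q \<in> borel_measurable borel" "f \<in> borel_measurable borel"
    and q0: "\<And>x. q x \<ge> 0" and m1: "(\<integral>\<^sup>+x. ennreal (q x) \<partial>lborel) \<le> 1"
  shows "EE (\<integral>\<^sup>+x. ennreal (q x) * f x \<partial>lborel) \<le> ennreal (exp 1) + (\<integral>\<^sup>+x. ennreal (q x) * EE (f x) \<partial>lborel)"
proof -
  define F where "F = (\<integral>\<^sup>+x. ennreal (q x) * f x \<partial>lborel)"
  define I where "I = (\<integral>\<^sup>+x. ennreal (q x) * EE (f x) \<partial>lborel)"
  define m where "m = (\<integral>\<^sup>+x. ennreal (q x) \<partial>lborel)"
  have FI: "F \<le> I" unfolding F_def I_def by (intro nn_integral_mono mult_left_mono EE_ge) auto
  have "EE F \<le> ennreal (exp 1) + I"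
  proof (cases F)
    case top then have "I = \<top>" using FI by (simp add: top_unique)
    then show ?thesis by simp
  next
    case (real r)
    show ?thesis
    proof (cases "r \<le> 1")
      case True
      then have "EE F \<le> ennreal (exp 1)" using real by (simp add: ennreal_leI)
      also have "ennreal (exp 1) \<le> ennreal (exp 1) + I" by simp
      finally show ?thesis .
    next
      case False
      then have r1: "r > 1" by simp
      have "(\<integral>\<^sup>+x. ennreal (q x) * (ennreal (exp r) * (f x + 1)) \<partial>lborel) \<le> (\<integral>\<^sup>+x. ennreal (q x) * (EE (f x) + ennreal (exp r * r)) \<partial>lborel)"
        by (intro nn_integral_mono mult_left_mono EE_tangent) (use r1 in auto)
      also have "\<dots> = (\<integral>\<^sup>+x. ennreal (q x) * EE (f x) + ennreal (exp r * r) * ennreal (q x) \<partial>lborel)"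
        by (simp add: distrib_left mult.commute)
      also have "\<dots> = I + ennreal (exp r * r) * m"
        unfolding I_def m_def by (subst nn_integral_add) (auto simp: nn_integral_cmult)
      also have "(\<integral>\<^sup>+x. ennreal (q x) * (ennreal (exp r) * (f x + 1)) \<partial>lborel) = (\<integral>\<^sup>+x. ennreal (exp r) * (ennreal (q x) * f x) + ennreal (exp r) * ennreal (q x) \<partial>lborel)"
        by (simp add: distrib_left mult_ac)
      also have "\<dots> = ennreal (exp r) * F + ennreal (exp r) * m"
        unfolding F_def m_def by (subst nn_integral_add) (auto simp: nn_integral_cmult)
      finally have key: "ennreal (exp r) * F + ennreal (exp r) * m \<le> I + ennreal (exp r * r) * m" .
      obtain mm where mm: "m = ennreal mm" "0 \<le> mm" "mm \<le> 1"
        using m1 unfolding m_def[symmetric]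
        by (metis ennreal_cases ennreal_le_1 ennreal_one_neq_top top.extremum_uniqueI)
      show ?thesis
      proof (cases I)
        case top then show ?thesis by simp
      next
        case (real i)
        have r0: "r \<ge> 0" using r1 by simp
        from key have "ennreal (exp r * r + exp r * mm) \<le> ennreal (i + exp r * r * mm)"
          using \<open>F = ennreal r\<close> real mm r0
          by (simp add: ennreal_mult[symmetric] ennreal_plus[symmetric] del: ennreal_plus)
        then have "exp r * r + exp r * mm \<le> i + exp r * r * mm"
          using real mm r0 by (subst (asm) ennreal_le_iff) auto
        moreover have "exp r * (r - 1) * (1 - mm) \<ge> 0" using r1 mm by simp
        ultimately have "exp r \<le> i" by (simp add: algebra_simps)
        then have "EE F \<le> I" using \<open>F = ennreal r\<close> real r0 by (simp add: ennreal_leI)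
        then show ?thesis by (simp add: add_increasing)
      qed
    qed
  qed
  then show ?thesis unfolding F_def I_def .
qed

lemma J:
  fixes q :: "real \<Rightarrow> real" and f :: "real \<Rightarrow> 'a \<Rightarrow> ennreal"
  assumes P: "prob_space M"
    and qm[measurable]: "q \<in> borel_measurable borel" and q0: "\<And>x. q x \<ge> 0"
    and m1: "(\<integral>\<^sup>+x. ennreal (q x) \<partial>lborel) \<le> 1"
    and fm[measurable]: "(\<lambda>p. f (fst p) (snd p)) \<in> borel_measurable (lborel \<Otimes>\<^sub>M M)"
    and C: "\<And>x. (\<integral>\<^sup>+\<omega>. EE (f x \<omega>) \<partial>M) \<le> C0"
  shows "(\<integral>\<^sup>+\<omega>. EE (\<integral>\<^sup>+x. ennreal (q x) * f x \<omega> \<partial>lborel) \<partial>M) \<le> ennreal (exp 1) + C0"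
proof -
  interpret prob_space M by (rule P)
  interpret PS: pair_sigma_finite lborel M ..
  have fm2[measurable]: "(\<lambda>p. f (snd p) (fst p)) \<in> borel_measurable (M \<Otimes>\<^sub>M lborel)"
    using measurable_pair_swap[OF fm] by (simp add: case_prod_beta')
  have fx[measurable]: "(\<lambda>\<omega>. f x \<omega>) \<in> borel_measurable M" for x
    using measurable_Pair2[OF fm, of x] by simp
  have fw: "(\<lambda>x. f x \<omega>) \<in> borel_measurable borel" if "\<omega> \<in> space M" for \<omega>
    using measurable_Pair1[OF fm that] by simp
  have "(\<integral>\<^sup>+\<omega>. EE (\<integral>\<^sup>+x. ennreal (q x) * f x \<omega> \<partial>lborel) \<partial>M)
      \<le> (\<integral>\<^sup>+\<omega>. ennreal (exp 1) + (\<integral>\<^sup>+x. ennreal (q x) * EE (f x \<omega>) \<partial>lborel) \<partial>M)"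
    by (rule nn_integral_mono) (rule pathJ[OF qm fw q0 m1])
  also have "\<dots> = ennreal (exp 1) + (\<integral>\<^sup>+\<omega>. (\<integral>\<^sup>+x. ennreal (q x) * EE (f x \<omega>) \<partial>lborel) \<partial>M)"
    by (subst nn_integral_add) (auto simp: emeasure_space_1)
  also have "(\<integral>\<^sup>+\<omega>. (\<integral>\<^sup>+x. ennreal (q x) * EE (f x \<omega>) \<partial>lborel) \<partial>M)
      = (\<integral>\<^sup>+x. (\<integral>\<^sup>+\<omega>. ennreal (q x) * EE (f x \<omega>) \<partial>M) \<partial>lborel)"
    by (rule PS.Fubini') measurable
  also have "\<dots> = (\<integral>\<^sup>+x. ennreal (q x) * (\<integral>\<^sup>+\<omega>. EE (f x \<omega>) \<partial>M) \<partial>lborel)"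
    by (rule nn_integral_cong) (rule nn_integral_cmult, measurable)
  also have "\<dots> \<le> (\<integral>\<^sup>+x. ennreal (q x) * C0 \<partial>lborel)"
    by (intro nn_integral_mono mult_left_mono C) simp
  also have "\<dots> = C0 * (\<integral>\<^sup>+x. ennreal (q x) \<partial>lborel)"
    by (subst nn_integral_multc) (auto simp: mult.commute)
  also have "\<dots> \<le> C0 * 1" by (rule mult_left_mono[OF m1]) simp
  finally show ?thesis by simp
qed


lemma ennreal_indicator_mult: "ennreal (indicator A x * y) = indicator A x * ennreal y"
  by (auto simp: indicator_def)

lemma pathwise:
  fixes zz BB :: "real \<Rightarrow> real^'n" and \<sigma> :: "real^'n^'n"
  assumes zc: "continuous_on {0..} zz" and bc: "continuous_on {0..} BB"
    and eq: "\<forall>t\<ge>0. zz t = \<sigma> *v BB t - integral {0..t} zz"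
    and K: "K > 0" "\<And>x. norm (\<sigma> *v x) \<le> K * norm x"
    and T: "T \<ge> 0" and \<kappa>: "\<kappa> > 0" and c0: "c0 > 0"
  shows "ennreal (c0 / (2*K\<^sup>2) * (N_norm \<kappa> T zz)\<^sup>2) \<le>
     (\<integral>\<^sup>+s. ennreal (indicator {0..T} s * exp (-\<kappa>*(T-s)) * exp (-s)) * ennreal (c0 * exp (-s) * (norm (BB (max 0 s)))\<^sup>2) \<partial>lborel) +
     (\<integral>\<^sup>+s. ennreal (\<kappa> * indicator {0..T} s * exp (-\<kappa>*(T-s))) *
        (\<integral>\<^sup>+u. ennreal (indicator {0..s} u * exp (-(s-u)/2) / 2) * ennreal (2*c0/\<kappa> * exp (-\<bar>s-u\<bar>/2) * (norm (BB (max 0 s) - BB (max 0 u)))\<^sup>2) \<partial>lborel) \<partial>lborel)"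
proof -
  define Bp where "Bp t = BB (max 0 t)" for t
  have Bpc: "continuous_on UNIV Bp"
    unfolding Bp_def by (rule continuous_on_compose2[OF bc]) (auto intro!: continuous_intros)
  have Bpm[measurable]: "Bp \<in> borel_measurable borel"
    by (rule borel_measurable_continuous_onI[OF Bpc])
  have Bp_eq: "t \<ge> 0 \<Longrightarrow> Bp t = BB t" for t unfolding Bp_def by simp
  have bc2: "continuous_on {0..} (\<lambda>t. \<sigma> *v BB t)"
    by (rule linear_continuous_on_compose[OF bc]) simp
  define X where "X s = integral {0..s} (\<lambda>u. exp (-(s-u)) * norm (BB s - BB u))" for s
  have cBs: "continuous_on {0..s} BB" if "s \<ge> 0" for s
    by (rule continuous_on_subset[OF bc]) auto
  have a: "norm (zz s) \<le> K * exp (-s) * norm (BB s) + K * X s" if s: "s \<ge> 0" for s :: real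
  proof -
    have o: "zz s = exp (-s) *\<^sub>R (\<sigma> *v BB s) + integral {0..s} (\<lambda>u. exp (-(s-u)) *\<^sub>R (\<sigma> *v BB s - \<sigma> *v BB u))"
      by (rule ode_solution[OF zc bc2 eq s])
    have cb: "continuous_on {0..s} (\<lambda>t. \<sigma> *v BB t)"
      by (rule continuous_on_subset[OF bc2]) auto
    have i1: "(\<lambda>u. exp (-(s-u)) *\<^sub>R (\<sigma> *v BB s - \<sigma> *v BB u)) integrable_on {0..s}"
      by (intro integrable_continuous_interval continuous_intros cb)
    have i2: "(\<lambda>u. K * (exp (-(s-u)) * norm (BB s - BB u))) integrable_on {0..s}"
      by (intro integrable_continuous_interval continuous_intros cBs s)
    have n: "norm (integral {0..s} (\<lambda>u. exp (-(s-u)) *\<^sub>R (\<sigma> *v BB s - \<sigma> *v BB u)))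
        \<le> integral {0..s} (\<lambda>u. K * (exp (-(s-u)) * norm (BB s - BB u)))"
    proof (rule integral_norm_bound_integral[OF i1 i2])
      fix u
      have "norm (exp (-(s-u)) *\<^sub>R (\<sigma> *v BB s - \<sigma> *v BB u)) = exp (-(s-u)) * norm (\<sigma> *v (BB s - BB u))"
        by (simp add: matrix_vector_mult_diff_distrib)
      also have "\<dots> \<le> exp (-(s-u)) * (K * norm (BB s - BB u))"
        by (rule mult_left_mono[OF K(2)]) simp
      finally show "norm (exp (-(s-u)) *\<^sub>R (\<sigma> *v BB s - \<sigma> *v BB u)) \<le> K * (exp (-(s-u)) * norm (BB s - BB u))"
        by (simp add: algebra_simps)
    qed
    have "integral {0..s} (\<lambda>u. K * (exp (-(s-u)) * norm (BB s - BB u))) = K * X s"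
      unfolding X_def by simp
    have "norm (zz s) \<le> norm (exp (-s) *\<^sub>R (\<sigma> *v BB s)) + norm (integral {0..s} (\<lambda>u. exp (-(s-u)) *\<^sub>R (\<sigma> *v BB s - \<sigma> *v BB u)))"
      unfolding o by (rule norm_triangle_ineq)
    also have "norm (exp (-s) *\<^sub>R (\<sigma> *v BB s)) \<le> K * exp (-s) * norm (BB s)"
      using mult_left_mono[OF K(2)[of "BB s"], of "exp (-s)"] by (simp add: algebra_simps)
    finally show ?thesis using n \<open>integral {0..s} _ = K * X s\<close> by linarith
  qed
  have hexp: "((\<lambda>u. exp (-(s-u))) has_integral (1 - exp (-s))) {0..s}" if s: "s \<ge> 0" for s :: real
  proof -
    have "((\<lambda>u. exp (1 * u + (-s))) has_integral (exp (1 * s + (-s)) - exp (1 * 0 + (-s))) / 1) {0..s}"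
      by (rule exp_hasint) (use s in auto)
    then show ?thesis by simp
  qed
  have b: "ennreal ((X s)\<^sup>2) \<le> (\<integral>\<^sup>+u. ennreal (indicator {0..s} u * exp (-(s-u)) * (norm (Bp s - Bp u))\<^sup>2) \<partial>lborel)"
    if s: "s \<ge> 0" for s :: real
  proof -
    define g where "g u = exp (-(s-u)) * norm (BB s - BB u)" for u
    have gi: "(g has_integral X s) {0..s}"
      unfolding X_def g_def by (intro integrable_integral integrable_continuous_interval continuous_intros cBs s)
    have X0: "X s \<ge> 0" using gi unfolding g_def by (rule has_integral_nonneg) simp
    have "ennreal (X s) = (\<integral>\<^sup>+u. ennreal (indicator {0..s} u * g u) \<partial>lborel)"
      by (rule nn_integral_has_integral_lebesgue[symmetric, OF _ gi]) (simp add: g_def)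
    also have "\<dots> = (\<integral>\<^sup>+u. ennreal (indicator {0..s} u * exp (-(s-u)/2)) * ennreal (indicator {0..s} u * exp (-(s-u)/2) * norm (Bp s - Bp u)) \<partial>lborel)"
    proof (rule nn_integral_cong)
      fix u :: real
      show "ennreal (indicator {0..s} u * g u) = ennreal (indicator {0..s} u * exp (-(s-u)/2)) * ennreal (indicator {0..s} u * exp (-(s-u)/2) * norm (Bp s - Bp u))"
      proof (cases "u \<in> {0..s}")
        case True
        then have "Bp u = BB u" "Bp s = BB s" using Bp_eq by auto
        moreover have "exp (-(s-u)/2) * exp (-(s-u)/2) = exp (-(s-u))" by (simp flip: exp_add)
        ultimately show ?thesis using True unfolding g_def
          by (simp add: ennreal_mult[symmetric] mult.assoc[symmetric] del: ennreal_mult')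
      qed simp
    qed
    finally have Xe: "ennreal (X s) = \<dots>" .
    have "ennreal ((X s)\<^sup>2) = (ennreal (X s))\<^sup>2" using X0 by (simp add: ennreal_power)
    also have "\<dots> \<le> (\<integral>\<^sup>+u. (ennreal (indicator {0..s} u * exp (-(s-u)/2)))\<^sup>2 \<partial>lborel) *
          (\<integral>\<^sup>+u. (ennreal (indicator {0..s} u * exp (-(s-u)/2) * norm (Bp s - Bp u)))\<^sup>2 \<partial>lborel)"
      unfolding Xe by (rule Cauchy_Schwarz_nn_integral) measurable
    also have "(\<integral>\<^sup>+u. (ennreal (indicator {0..s} u * exp (-(s-u)/2)))\<^sup>2 \<partial>lborel) = (\<integral>\<^sup>+u. ennreal (indicator {0..s} u * exp (-(s-u))) \<partial>lborel)"
    proof (rule nn_integral_cong)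
      fix u :: real
      have "exp (-(s-u)/2) ^ 2 = exp (-(s-u))" by (simp add: power2_eq_square flip: exp_add)
      then show "(ennreal (indicator {0..s} u * exp (-(s-u)/2)))\<^sup>2 = ennreal (indicator {0..s} u * exp (-(s-u)))"
        by (cases "u \<in> {0..s}") (simp_all add: ennreal_power)
    qed
    also have "\<dots> = ennreal (1 - exp (-s))"
      by (rule nn_integral_has_integral_lebesgue[OF _ hexp[OF s]]) simp
    also have "(\<integral>\<^sup>+u. (ennreal (indicator {0..s} u * exp (-(s-u)/2) * norm (Bp s - Bp u)))\<^sup>2 \<partial>lborel)
        = (\<integral>\<^sup>+u. ennreal (indicator {0..s} u * exp (-(s-u)) * (norm (Bp s - Bp u))\<^sup>2) \<partial>lborel)"
    proof (rule nn_integral_cong)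
      fix u :: real
      have "exp (-(s-u)/2) ^ 2 = exp (-(s-u))" by (simp add: power2_eq_square flip: exp_add)
      then show "(ennreal (indicator {0..s} u * exp (-(s-u)/2) * norm (Bp s - Bp u)))\<^sup>2 = ennreal (indicator {0..s} u * exp (-(s-u)) * (norm (Bp s - Bp u))\<^sup>2)"
        by (cases "u \<in> {0..s}") (simp_all add: ennreal_power power_mult_distrib)
    qed
    also have "ennreal (1 - exp (-s)) * \<dots> \<le> 1 * \<dots>"
      by (rule mult_right_mono) (simp_all add: ennreal_le_1)
    finally show ?thesis by simp
  qed
  define w where "w s = exp (-\<kappa>*(T-s))" for s
  define F1 where "F1 s = ennreal (indicator {0..T} s * exp (-\<kappa>*(T-s)) * exp (-s)) * ennreal (c0 * exp (-s) * (norm (Bp s))\<^sup>2)" for s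
  define F2 where "F2 s = ennreal (\<kappa> * indicator {0..T} s * exp (-\<kappa>*(T-s))) *
        (\<integral>\<^sup>+u. ennreal (indicator {0..s} u * exp (-(s-u)/2) / 2) * ennreal (2*c0/\<kappa> * exp (-\<bar>s-u\<bar>/2) * (norm (Bp s - Bp u))\<^sup>2) \<partial>lborel)" for s
  have X0: "X s \<ge> 0" if "s \<ge> 0" for s
    unfolding X_def by (intro integral_nonneg integrable_continuous_interval continuous_intros cBs that) simp
  have pt: "ennreal (indicator {0..T} s * (c0/(2*K\<^sup>2) * (w s * (norm (zz s))\<^sup>2))) \<le> F1 s + F2 s" for s
  proof (cases "s \<in> {0..T}")
    case False then show ?thesis by simp
  next
    case True
    then have s0: "s \<ge> 0" by simp
    have w0: "w s > 0" unfolding w_def by simp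
    define P where "P = K * exp (-s) * norm (BB s)"
    define Q where "Q = K * X s"
    have P0: "P \<ge> 0" and Q0: "Q \<ge> 0" unfolding P_def Q_def using K X0[OF s0] by auto
    have "norm (zz s) \<le> P + Q" using a[OF s0] unfolding P_def Q_def .
    then have "(norm (zz s))\<^sup>2 \<le> (P + Q)\<^sup>2" by (intro power_mono) auto
    also have "\<dots> \<le> 2 * P\<^sup>2 + 2 * Q\<^sup>2"
    proof -
      have "0 \<le> (P - Q)\<^sup>2" by simp
      then show ?thesis unfolding power2_eq_square by (simp add: algebra_simps)
    qed
    finally have sq: "(norm (zz s))\<^sup>2 \<le> 2 * P\<^sup>2 + 2 * Q\<^sup>2" .
    have "c0/(2*K\<^sup>2) * (w s * (norm (zz s))\<^sup>2) \<le> c0/(2*K\<^sup>2) * (w s * (2 * P\<^sup>2 + 2 * Q\<^sup>2))"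
      using sq w0 c0 K by (intro mult_left_mono) auto
    also have "\<dots> = c0 * w s * (exp (-s))\<^sup>2 * (norm (BB s))\<^sup>2 + c0 * w s * (X s)\<^sup>2"
      unfolding P_def Q_def using K by (simp add: field_simps power2_eq_square)
    finally have r: "c0/(2*K\<^sup>2) * (w s * (norm (zz s))\<^sup>2) \<le> c0 * w s * (exp (-s))\<^sup>2 * (norm (BB s))\<^sup>2 + c0 * w s * (X s)\<^sup>2" .
    have e1: "ennreal (c0 * w s * (exp (-s))\<^sup>2 * (norm (BB s))\<^sup>2) = F1 s"
    proof -
      have "c0 * w s * (exp (-s))\<^sup>2 * (norm (BB s))\<^sup>2 = (indicator {0..T} s * exp (-\<kappa>*(T-s)) * exp (-s)) * (c0 * exp (-s) * (norm (Bp s))\<^sup>2)"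
        using True Bp_eq[OF s0] unfolding w_def by (simp add: power2_eq_square)
      then show ?thesis unfolding F1_def by (simp only:) (rule ennreal_mult, simp, use c0 in simp)
    qed
    have e2: "ennreal (c0 * w s * (X s)\<^sup>2) \<le> F2 s"
    proof -
      have "ennreal (c0 * w s * (X s)\<^sup>2) = ennreal (c0 * w s) * ennreal ((X s)\<^sup>2)"
        using c0 w0 by (simp add: ennreal_mult)
      also have "\<dots> \<le> ennreal (c0 * w s) * (\<integral>\<^sup>+u. ennreal (indicator {0..s} u * exp (-(s-u)) * (norm (Bp s - Bp u))\<^sup>2) \<partial>lborel)"
        by (rule mult_left_mono[OF b[OF s0]]) simp
      also have "\<dots> = (\<integral>\<^sup>+u. ennreal (c0 * w s) * ennreal (indicator {0..s} u * exp (-(s-u)) * (norm (Bp s - Bp u))\<^sup>2) \<partial>lborel)"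
        by (rule nn_integral_cmult[symmetric]) measurable
      also have "\<dots> = (\<integral>\<^sup>+u. ennreal (\<kappa> * indicator {0..T} s * exp (-\<kappa>*(T-s))) * (ennreal (indicator {0..s} u * exp (-(s-u)/2) / 2) * ennreal (2*c0/\<kappa> * exp (-\<bar>s-u\<bar>/2) * (norm (Bp s - Bp u))\<^sup>2)) \<partial>lborel)"
      proof (rule nn_integral_cong)
        fix u :: real
        have "c0 * w s * (indicator {0..s} u * exp (-(s-u)) * (norm (Bp s - Bp u))\<^sup>2)
          = (\<kappa> * indicator {0..T} s * exp (-\<kappa>*(T-s))) * ((indicator {0..s} u * exp (-(s-u)/2) / 2) * (2*c0/\<kappa> * exp (-\<bar>s-u\<bar>/2) * (norm (Bp s - Bp u))\<^sup>2))"
        proof (cases "u \<in> {0..s}")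
          case True
          then have "\<bar>s-u\<bar> = s - u" by auto
          moreover have "exp (-(s-u)) = exp (-(s-u)/2) * exp (-(s-u)/2)" by (simp flip: exp_add)
          ultimately show ?thesis using True \<open>s \<in> {0..T}\<close> \<kappa> unfolding w_def by (simp add: field_simps)
        qed simp
        then show "ennreal (c0 * w s) * ennreal (indicator {0..s} u * exp (-(s-u)) * (norm (Bp s - Bp u))\<^sup>2) =
           ennreal (\<kappa> * indicator {0..T} s * exp (-\<kappa>*(T-s))) * (ennreal (indicator {0..s} u * exp (-(s-u)/2) / 2) * ennreal (2*c0/\<kappa> * exp (-\<bar>s-u\<bar>/2) * (norm (Bp s - Bp u))\<^sup>2))"
          using c0 w0 \<kappa> by (simp add: ennreal_mult[symmetric] del: ennreal_mult')
      qed
      also have "\<dots> = F2 s" unfolding F2_def by (rule nn_integral_cmult) measurable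
      finally show ?thesis .
    qed
    have "ennreal (indicator {0..T} s * (c0/(2*K\<^sup>2) * (w s * (norm (zz s))\<^sup>2))) = ennreal (c0/(2*K\<^sup>2) * (w s * (norm (zz s))\<^sup>2))"
      using True by simp
    also have "\<dots> \<le> ennreal (c0 * w s * (exp (-s))\<^sup>2 * (norm (BB s))\<^sup>2 + c0 * w s * (X s)\<^sup>2)"
      by (rule ennreal_leI[OF r])
    also have "\<dots> = ennreal (c0 * w s * (exp (-s))\<^sup>2 * (norm (BB s))\<^sup>2) + ennreal (c0 * w s * (X s)\<^sup>2)"
      using c0 w0 by (intro ennreal_plus) auto
    also have "\<dots> \<le> F1 s + F2 s" unfolding e1 using e2 by (rule add_left_mono)
    finally show ?thesis .
  qed
  have zcT: "continuous_on {0..T} zz" by (rule continuous_on_subset[OF zc]) auto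
  have hi: "((\<lambda>s. w s * (norm (zz s))\<^sup>2) has_integral integral {0..T} (\<lambda>s. w s * (norm (zz s))\<^sup>2)) {0..T}"
    unfolding w_def by (intro integrable_integral integrable_continuous_interval continuous_intros zcT)
  have I0: "integral {0..T} (\<lambda>s. w s * (norm (zz s))\<^sup>2) \<ge> 0"
    using hi by (rule has_integral_nonneg) (simp add: w_def)
  have N2: "(N_norm \<kappa> T zz)\<^sup>2 = integral {0..T} (\<lambda>s. w s * (norm (zz s))\<^sup>2)"
    unfolding N_norm_def w_def using I0 unfolding w_def by simp
  have "ennreal (c0 / (2*K\<^sup>2) * (N_norm \<kappa> T zz)\<^sup>2) = (\<integral>\<^sup>+s. ennreal (indicator {0..T} s * (c0/(2*K\<^sup>2) * (w s * (norm (zz s))\<^sup>2))) \<partial>lborel)"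
    unfolding N2 by (rule nn_integral_has_integral_lebesgue[symmetric, OF _ has_integral_mult_right[OF hi]])
      (use c0 in \<open>simp add: w_def\<close>)
  also have "\<dots> \<le> (\<integral>\<^sup>+s. F1 s + F2 s \<partial>lborel)"
    by (rule nn_integral_mono) (rule pt)
  also have "\<dots> = (\<integral>\<^sup>+s. F1 s \<partial>lborel) + (\<integral>\<^sup>+s. F2 s \<partial>lborel)"
    by (rule nn_integral_add) (simp_all add: F1_def F2_def)
  finally show ?thesis unfolding F1_def F2_def Bp_def .
qed


lemma powr_bound:
  fixes x H :: real
  assumes "x \<ge> 0" "0 < H" "H < 1"
  shows "x powr (2*H) \<le> 1 + x\<^sup>2"
proof (cases "x \<le> 1")
  case True
  then have "x powr (2*H) \<le> 1" using assms by (intro powr_le1) auto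
  then show ?thesis by (smt (verit) zero_le_power2)
next
  case False
  then have "x powr (2*H) \<le> x powr 2" using assms by (intro powr_mono) auto
  also have "x powr 2 = x\<^sup>2" using False by (simp add: powr_numeral)
  finally show ?thesis by simp
qed

lemma quad_exp: "y \<ge> 0 \<Longrightarrow> 1 + y\<^sup>2 \<le> 2 * exp (y::real)"
  using exp_lower_Taylor_quadratic[of y] by simp

lemma quad_exp2: "y \<ge> 0 \<Longrightarrow> 1 + y\<^sup>2 \<le> 8 * exp (y/2::real)"
  using exp_lower_Taylor_quadratic[of "y/2"] by (simp add: power_divide)

lemma exp_norm_le_sum:
  fixes x :: "real^'n"
  assumes "c \<ge> 0"
  shows "exp (c * (norm x)\<^sup>2) \<le> (\<Sum>j\<in>UNIV. exp (real CARD('n) * c * (x$j)\<^sup>2))"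
proof -
  have "Max (range (\<lambda>j. (x$j)\<^sup>2)) \<in> range (\<lambda>j. (x$j)\<^sup>2)" by (rule Max_in) auto
  then obtain j0 where j0e: "Max (range (\<lambda>j. (x$j)\<^sup>2)) = (x$j0)\<^sup>2" by blast
  have j0: "(x$j)\<^sup>2 \<le> (x$j0)\<^sup>2" for j unfolding j0e[symmetric] by (rule Max_ge) auto
  have "(norm x)\<^sup>2 = (\<Sum>j\<in>UNIV. (x$j)\<^sup>2)"
    unfolding power2_norm_eq_inner inner_vec_def by (simp add: power2_eq_square)
  also have "\<dots> \<le> (\<Sum>j\<in>(UNIV::'n set). (x$j0)\<^sup>2)" by (intro sum_mono j0)
  also have "\<dots> = real CARD('n) * (x$j0)\<^sup>2" by simp
  finally have "c * (norm x)\<^sup>2 \<le> real CARD('n) * c * (x$j0)\<^sup>2"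
    using assms by (metis mult.assoc mult.commute mult_left_mono)
  then have "exp (c * (norm x)\<^sup>2) \<le> exp (real CARD('n) * c * (x$j0)\<^sup>2)" by simp
  also have "\<dots> \<le> (\<Sum>j\<in>UNIV. exp (real CARD('n) * c * (x$j)\<^sup>2))"
    by (rule member_le_sum) auto
  finally show ?thesis .
qed

lemma vec_moment:
  fixes Y :: "'a \<Rightarrow> real^'n"
  assumes P: "prob_space M" and G: "\<And>j. centered_gaussian M (\<lambda>\<omega>. Y \<omega> $ j) (v j)"
    and c: "c \<ge> 0" and cv: "\<And>j. real CARD('n) * c * v j \<le> 1/4"
  shows "(\<integral>\<^sup>+\<omega>. ennreal (exp (c * (norm (Y \<omega>))\<^sup>2)) \<partial>M) \<le> ennreal (2 * real CARD('n))"
proof -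
  have m[measurable]: "(\<lambda>\<omega>. Y \<omega> $ j) \<in> borel_measurable M" for j
    using G[of j] unfolding centered_gaussian_def by blast
  have "(\<integral>\<^sup>+\<omega>. ennreal (exp (c * (norm (Y \<omega>))\<^sup>2)) \<partial>M) \<le> (\<integral>\<^sup>+\<omega>. (\<Sum>j\<in>UNIV. ennreal (exp (real CARD('n) * c * (Y \<omega> $ j)\<^sup>2))) \<partial>M)"
    by (intro nn_integral_mono) (simp add: ennreal_leI exp_norm_le_sum[OF c])
  also have "\<dots> = (\<Sum>j\<in>UNIV. (\<integral>\<^sup>+\<omega>. ennreal (exp (real CARD('n) * c * (Y \<omega> $ j)\<^sup>2)) \<partial>M))"
    by (rule nn_integral_sum) measurable
  also have "\<dots> \<le> (\<Sum>j\<in>(UNIV::'n set). 2)"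
  proof (rule sum_mono)
    fix j
    show "(\<integral>\<^sup>+\<omega>. ennreal (exp (real CARD('n) * c * (Y \<omega> $ j)\<^sup>2)) \<partial>M) \<le> 2"
      by (rule gauss_moment[OF P G]) (use c cv[of j] in auto)
  qed
  also have "\<dots> = of_nat CARD('n) * 2" by simp
  also have "\<dots> = ennreal (2 * real CARD('n))"
    by (subst ennreal_mult) (auto simp: ennreal_of_nat_eq_real_of_nat mult.commute)
  finally show ?thesis .
qed


lemma fbm_H:
  assumes "is_fbm M H B"
  shows "\<forall>(S::nat set) (tt::nat \<Rightarrow> real) (jj::nat \<Rightarrow> 'b::finite) (a::nat \<Rightarrow> real).
        finite S \<longrightarrow> (\<forall>k\<in>S. tt k \<ge> 0) \<longrightarrow>
        centered_gaussian M (\<lambda>\<omega>. \<Sum>k\<in>S. a k * (B (tt k) \<omega> $ jj k))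
          (\<Sum>k\<in>S. \<Sum>l\<in>S. if jj k = jj l then a k * a l * fbm_cov H (tt k) (tt l) else 0)"
  using assms unfolding is_fbm_def by (elim conjE) assumption

lemma fbm_var1:
  assumes "is_fbm M H B" "t \<ge> 0"
  shows "centered_gaussian M (\<lambda>\<omega>. B t \<omega> $ j) (t powr (2*H))"
proof -
  have "centered_gaussian M (\<lambda>\<omega>. \<Sum>k\<in>{0::nat}. (\<lambda>_. 1::real) k * (B ((\<lambda>_. t) k) \<omega> $ (\<lambda>_. j) k))
      (\<Sum>k\<in>{0::nat}. \<Sum>l\<in>{0::nat}. if (\<lambda>_. j) k = (\<lambda>_. j) l then (\<lambda>_. 1::real) k * (\<lambda>_. 1) l * fbm_cov H ((\<lambda>_. t) k) ((\<lambda>_. t) l) else 0)"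
    using fbm_H[OF assms(1), THEN spec[where x="{0}"], THEN spec[where x="\<lambda>_. t"], THEN spec[where x="\<lambda>_. j"], THEN spec[where x="\<lambda>_. 1"]] assms(2) by simp
  then show ?thesis by (simp add: fbm_cov_def)
qed

lemma fbm_var2:
  assumes "is_fbm M H B" "s \<ge> 0" "u \<ge> 0"
  shows "centered_gaussian M (\<lambda>\<omega>. B s \<omega> $ j - B u \<omega> $ j) (\<bar>s - u\<bar> powr (2*H))"
proof -
  define tt where "tt k = (if k = (0::nat) then s else u)" for k
  define a where "a k = (if k = (0::nat) then 1 else -1::real)" for k
  have "centered_gaussian M (\<lambda>\<omega>. \<Sum>k\<in>{0::nat,1}. a k * (B (tt k) \<omega> $ (\<lambda>_. j) k))
      (\<Sum>k\<in>{0::nat,1}. \<Sum>l\<in>{0::nat,1}. if (\<lambda>_. j) k = (\<lambda>_. j) l then a k * a l * fbm_cov H (tt k) (tt l) else 0)"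
  proof -
    note H = fbm_H[OF assms(1)]
    have "\<forall>k\<in>{0::nat,1}. tt k \<ge> 0" using assms unfolding tt_def by auto
    then show ?thesis using H[THEN spec[where x="{0,1}"], THEN spec[where x=tt], THEN spec[where x="\<lambda>_. j"], THEN spec[where x=a]] by simp
  qed
  moreover have "(\<lambda>\<omega>. \<Sum>k\<in>{0::nat,1}. a k * (B (tt k) \<omega> $ (\<lambda>_. j) k)) = (\<lambda>\<omega>. B s \<omega> $ j - B u \<omega> $ j)"
    by (simp add: a_def tt_def)
  moreover have "(\<Sum>k\<in>{0::nat,1}. \<Sum>l\<in>{0::nat,1}. if (\<lambda>_. j) k = (\<lambda>_. j) l then a k * a l * fbm_cov H (tt k) (tt l) else 0)
      = \<bar>s - u\<bar> powr (2*H)"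
    by (simp add: a_def tt_def fbm_cov_def abs_minus_commute field_simps)
  ultimately show ?thesis by simp
qed

lemma floor_approx: "(\<lambda>k. of_int \<lfloor>x * real (Suc k)\<rfloor> / real (Suc k)) \<longlonglongrightarrow> (x::real)"
proof (rule tendsto_sandwich[where f="\<lambda>k. x - 1 / real (Suc k)" and h="\<lambda>k. x"])
  show "\<forall>\<^sub>F k in sequentially. x - 1 / real (Suc k) \<le> of_int \<lfloor>x * real (Suc k)\<rfloor> / real (Suc k)"
  proof (rule always_eventually, rule allI)
    fix k
    have "x * real (Suc k) - 1 \<le> of_int \<lfloor>x * real (Suc k)\<rfloor>" by linarith
    then have "(x * real (Suc k) - 1) / real (Suc k) \<le> of_int \<lfloor>x * real (Suc k)\<rfloor> / real (Suc k)"
      by (rule divide_right_mono) simp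
    then show "x - 1 / real (Suc k) \<le> of_int \<lfloor>x * real (Suc k)\<rfloor> / real (Suc k)"
      by (simp add: diff_divide_distrib)
  qed
  show "\<forall>\<^sub>F k in sequentially. of_int \<lfloor>x * real (Suc k)\<rfloor> / real (Suc k) \<le> x"
  proof (rule always_eventually, rule allI)
    fix k
    have "of_int \<lfloor>x * real (Suc k)\<rfloor> \<le> x * real (Suc k)" by linarith
    then have "of_int \<lfloor>x * real (Suc k)\<rfloor> / real (Suc k) \<le> x * real (Suc k) / real (Suc k)"
      by (rule divide_right_mono) simp
    then show "of_int \<lfloor>x * real (Suc k)\<rfloor> / real (Suc k) \<le> x" by simp
  qed
  have "(\<lambda>k. 1 / real (Suc k)) \<longlonglongrightarrow> 0" by (rule LIMSEQ_Suc[OF lim_const_over_n])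
  then show "(\<lambda>k. x - 1 / real (Suc k)) \<longlonglongrightarrow> x"
    using tendsto_diff[OF tendsto_const[of x]] by fastforce
qed simp

lemma joint_meas:
  assumes "is_fbm M H B"
  shows "(\<lambda>p. B (max 0 (fst p)) (snd p)) \<in> borel_measurable (lborel \<Otimes>\<^sub>M M)"
proof -
  have Bm: "B t \<in> borel_measurable M" if "t \<ge> 0" for t using assms that unfolding is_fbm_def by blast
  have cont: "continuous_on {0..} (\<lambda>t. B t \<omega>)" if "\<omega> \<in> space M" for \<omega>
    using assms that unfolding is_fbm_def by blast
  define A where "A k p = B (max 0 (of_int \<lfloor>fst p * real (Suc k)\<rfloor> / real (Suc k))) (snd p)" for k p
  have Am: "A k \<in> borel_measurable (lborel \<Otimes>\<^sub>M M)" for k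
  proof -
    have f: "(\<lambda>p. B (max 0 (of_int i / real (Suc k))) (snd p)) \<in> borel_measurable (lborel \<Otimes>\<^sub>M M)" for i :: int
      by (rule measurable_compose[OF measurable_snd Bm]) simp
    have g: "(\<lambda>p. \<lfloor>fst p * real (Suc k)\<rfloor>) \<in> measurable (lborel \<Otimes>\<^sub>M M) (count_space UNIV)"
    proof (subst measurable_count_space_eq2_countable, safe)
      fix a :: int
      have "(\<lambda>p. \<lfloor>fst p * real (Suc k)\<rfloor>) -` {a} \<inter> space (lborel \<Otimes>\<^sub>M M)
          = {p \<in> space (lborel \<Otimes>\<^sub>M M). of_int a \<le> fst p * real (Suc k) \<and> fst p * real (Suc k) < of_int a + 1}"
        by (auto simp: floor_eq_iff)
      also have "\<dots> \<in> sets (lborel \<Otimes>\<^sub>M M)" by measurable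
      finally show "(\<lambda>p. \<lfloor>fst p * real (Suc k)\<rfloor>) -` {a} \<inter> space (lborel \<Otimes>\<^sub>M M) \<in> sets (lborel \<Otimes>\<^sub>M M)" .
    qed simp
    show ?thesis unfolding A_def
      by (rule measurable_compose_countable'[OF f g]) simp
  qed
  show ?thesis
  proof (rule borel_measurable_LIMSEQ_metric[OF Am])
    fix p :: "real \<times> 'a" assume p: "p \<in> space (lborel \<Otimes>\<^sub>M M)"
    then have w: "snd p \<in> space M" by (auto simp: space_pair_measure)
    have c: "continuous_on UNIV (\<lambda>t. B (max 0 t) (snd p))"
      by (rule continuous_on_compose2[OF cont[OF w]]) (auto intro!: continuous_intros)
    then have "isCont (\<lambda>t. B (max 0 t) (snd p)) (fst p)"
      by (simp add: continuous_on_eq_continuous_at)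
    from isCont_tendsto_compose[OF this floor_approx]
    show "(\<lambda>k. A k p) \<longlonglongrightarrow> B (max 0 (fst p)) (snd p)" unfolding A_def .
  qed
qed


lemma momA:
  fixes B :: "real \<Rightarrow> 'a \<Rightarrow> real^'n"
  assumes fbm: "is_fbm M H B" and H: "0 < H" "H < 1" and c0: "c0 \<ge> 0" "real CARD('n) * c0 * 2 \<le> 1/4"
  shows "(\<integral>\<^sup>+\<omega>. EE (ennreal (c0 * exp (-s) * (norm (B (max 0 s) \<omega>))\<^sup>2)) \<partial>M) \<le> ennreal (2 * real CARD('n))"
proof -
  have P: "prob_space M" using fbm unfolding is_fbm_def by blast
  have "(\<integral>\<^sup>+\<omega>. EE (ennreal (c0 * exp (-s) * (norm (B (max 0 s) \<omega>))\<^sup>2)) \<partial>M)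
      = (\<integral>\<^sup>+\<omega>. ennreal (exp (c0 * exp (-s) * (norm (B (max 0 s) \<omega>))\<^sup>2)) \<partial>M)"
    using c0 by (intro nn_integral_cong) simp
  also have "\<dots> \<le> ennreal (2 * real CARD('n))"
  proof (rule vec_moment[OF P])
    fix j
    show "centered_gaussian M (\<lambda>\<omega>. B (max 0 s) \<omega> $ j) ((max 0 s) powr (2*H))"
      by (rule fbm_var1[OF fbm]) simp
    have "exp (-s) * (max 0 s) powr (2*H) \<le> 2"
    proof (cases "s \<ge> 0")
      case True
      have "s powr (2*H) \<le> 2 * exp s" using powr_bound[OF True H] quad_exp[OF True] by linarith
      then have "exp (-s) * s powr (2*H) \<le> exp (-s) * (2 * exp s)" by (intro mult_left_mono) auto
      also have "\<dots> = 2" by (simp flip: exp_add)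
      finally show ?thesis using True by simp
    qed simp
    then have "real CARD('n) * c0 * (exp (-s) * (max 0 s) powr (2*H)) \<le> real CARD('n) * c0 * 2"
      using c0 by (intro mult_left_mono) auto
    then show "real CARD('n) * (c0 * exp (-s)) * (max 0 s) powr (2*H) \<le> 1/4"
      using c0 by (simp add: mult_ac)
  qed (use c0 in simp)
  finally show ?thesis .
qed

lemma momB:
  fixes B :: "real \<Rightarrow> 'a \<Rightarrow> real^'n"
  assumes fbm: "is_fbm M H B" and H: "0 < H" "H < 1" and c0: "c0 \<ge> 0" and \<kappa>: "\<kappa> > 0"
    and cc: "real CARD('n) * (2*c0/\<kappa>) * 8 \<le> 1/4"
  shows "(\<integral>\<^sup>+\<omega>. EE (ennreal (2*c0/\<kappa> * exp (-\<bar>s-u\<bar>/2) * (norm (B (max 0 s) \<omega> - B (max 0 u) \<omega>))\<^sup>2)) \<partial>M) \<le> ennreal (2 * real CARD('n))"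
proof -
  have P: "prob_space M" using fbm unfolding is_fbm_def by blast
  have c1: "2*c0/\<kappa> \<ge> 0" using c0 \<kappa> by simp
  have "(\<integral>\<^sup>+\<omega>. EE (ennreal (2*c0/\<kappa> * exp (-\<bar>s-u\<bar>/2) * (norm (B (max 0 s) \<omega> - B (max 0 u) \<omega>))\<^sup>2)) \<partial>M)
      = (\<integral>\<^sup>+\<omega>. ennreal (exp (2*c0/\<kappa> * exp (-\<bar>s-u\<bar>/2) * (norm (B (max 0 s) \<omega> - B (max 0 u) \<omega>))\<^sup>2)) \<partial>M)"
    by (intro nn_integral_cong EE_ennreal mult_nonneg_nonneg c1) auto
  also have "\<dots> \<le> ennreal (2 * real CARD('n))"
  proof (rule vec_moment[OF P])
    fix j
    show "centered_gaussian M (\<lambda>\<omega>. (B (max 0 s) \<omega> - B (max 0 u) \<omega>) $ j) (\<bar>max 0 s - max 0 u\<bar> powr (2*H))"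
      using fbm_var2[OF fbm, of "max 0 s" "max 0 u" j] by simp
    have d: "\<bar>max 0 s - max 0 u\<bar> \<le> \<bar>s - u\<bar>" by linarith
    have "\<bar>max 0 s - max 0 u\<bar> powr (2*H) \<le> 1 + \<bar>max 0 s - max 0 u\<bar>\<^sup>2"
      by (rule powr_bound[OF _ H]) simp
    also have "\<dots> \<le> 1 + \<bar>s - u\<bar>\<^sup>2" using power_mono[OF d, of 2] by simp
    also have "\<dots> \<le> 8 * exp (\<bar>s - u\<bar>/2)" by (rule quad_exp2) simp
    finally have "exp (-\<bar>s-u\<bar>/2) * \<bar>max 0 s - max 0 u\<bar> powr (2*H) \<le> exp (-\<bar>s-u\<bar>/2) * (8 * exp (\<bar>s - u\<bar>/2))"
      by (intro mult_left_mono) auto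
    also have "\<dots> = 8" by (simp flip: exp_add)
    finally have "real CARD('n) * (2*c0/\<kappa>) * (exp (-\<bar>s-u\<bar>/2) * \<bar>max 0 s - max 0 u\<bar> powr (2*H)) \<le> real CARD('n) * (2*c0/\<kappa>) * 8"
      by (intro mult_left_mono mult_nonneg_nonneg c1) auto
    then have "real CARD('n) * (2*c0/\<kappa>) * (exp (-\<bar>s-u\<bar>/2) * \<bar>max 0 s - max 0 u\<bar> powr (2*H)) \<le> 1/4"
      using cc by linarith
    then show "real CARD('n) * (2*c0/\<kappa> * exp (-\<bar>s-u\<bar>/2)) * \<bar>max 0 s - max 0 u\<bar> powr (2*H) \<le> 1/4"
      by (simp only: mult.assoc)
  qed (intro mult_nonneg_nonneg c1, simp)
  finally show ?thesis .
qed


lemma mass1: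
  assumes T: "T \<ge> 0" and \<kappa>: "\<kappa> > 0"
  shows "(\<integral>\<^sup>+s. ennreal (indicator {0..T} s * exp (-\<kappa>*(T-s)) * exp (-s)) \<partial>lborel) \<le> 1"
proof -
  have "(\<integral>\<^sup>+s. ennreal (indicator {0..T} s * exp (-\<kappa>*(T-s)) * exp (-s)) \<partial>lborel) \<le> (\<integral>\<^sup>+s. ennreal (indicator {0..T} s * exp (-s)) \<partial>lborel)"
  proof (intro nn_integral_mono ennreal_leI)
    fix s :: real
    show "indicator {0..T} s * exp (-\<kappa>*(T-s)) * exp (-s) \<le> indicator {0..T} s * exp (-s)"
      using \<kappa> by (cases "s \<in> {0..T}") (auto simp: mult_le_cancel_right1)
  qed
  also have "\<dots> = ennreal (1 - exp (-T))"
  proof (rule nn_integral_has_integral_lebesgue)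
    have "((\<lambda>u. exp ((-1) * u + 0)) has_integral (exp ((-1) * T + 0) - exp ((-1) * 0 + 0)) / (-1)) {0..T}"
      by (rule exp_hasint) (use T in auto)
    then show "((\<lambda>s. exp (-s)) has_integral 1 - exp (-T)) {0..T}" by simp
  qed simp
  also have "\<dots> \<le> 1" by (simp add: ennreal_le_1)
  finally show ?thesis .
qed

lemma mass2:
  assumes T: "T \<ge> 0" and \<kappa>: "\<kappa> > 0"
  shows "(\<integral>\<^sup>+s. ennreal (\<kappa> * indicator {0..T} s * exp (-\<kappa>*(T-s))) \<partial>lborel) \<le> 1"
proof -
  have "(\<integral>\<^sup>+s. ennreal (\<kappa> * indicator {0..T} s * exp (-\<kappa>*(T-s))) \<partial>lborel) = (\<integral>\<^sup>+s. ennreal (indicator {0..T} s * (\<kappa> * exp (-\<kappa>*(T-s)))) \<partial>lborel)"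
    by (simp add: mult_ac)
  also have "\<dots> = ennreal (1 - exp (-\<kappa>*T))"
  proof (rule nn_integral_has_integral_lebesgue)
    have "((\<lambda>u. exp (\<kappa> * u + (-\<kappa>*T))) has_integral (exp (\<kappa> * T + (-\<kappa>*T)) - exp (\<kappa> * 0 + (-\<kappa>*T))) / \<kappa>) {0..T}"
      by (rule exp_hasint) (use T \<kappa> in auto)
    then have "((\<lambda>u. \<kappa> * exp (\<kappa> * u + (-\<kappa>*T))) has_integral \<kappa> * ((exp (\<kappa> * T + (-\<kappa>*T)) - exp (\<kappa> * 0 + (-\<kappa>*T))) / \<kappa>)) {0..T}"
      by (rule has_integral_mult_right)
    moreover have "(\<lambda>u. \<kappa> * exp (\<kappa> * u + (-\<kappa>*T))) = (\<lambda>s. \<kappa> * exp (-\<kappa>*(T-s)))"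
      by (rule ext) (simp add: algebra_simps)
    moreover have "\<kappa> * ((exp (\<kappa> * T + (-\<kappa>*T)) - exp (\<kappa> * 0 + (-\<kappa>*T))) / \<kappa>) = 1 - exp (-\<kappa>*T)"
      using \<kappa> by simp
    ultimately show "((\<lambda>s. \<kappa> * exp (-\<kappa>*(T-s))) has_integral 1 - exp (-\<kappa>*T)) {0..T}" by simp
  qed (use \<kappa> in simp)
  also have "\<dots> \<le> 1" by (simp add: ennreal_le_1)
  finally show ?thesis .
qed

lemma mass3:
  shows "(\<integral>\<^sup>+u. ennreal (indicator {0..s} u * exp (-(s-u)/2) / 2) \<partial>lborel) \<le> 1"
proof (cases "s \<ge> 0")
  case False
  then have "{0..s} = {}" by auto
  then show ?thesis by simp
next
  case True
  have "(\<integral>\<^sup>+u. ennreal (indicator {0..s} u * exp (-(s-u)/2) / 2) \<partial>lborel) = (\<integral>\<^sup>+u. ennreal (indicator {0..s} u * (exp (-(s-u)/2) / 2)) \<partial>lborel)"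
    by simp
  also have "\<dots> = ennreal (1 - exp (-s/2))"
  proof (rule nn_integral_has_integral_lebesgue)
    have "((\<lambda>u. exp ((1/2) * u + (-s/2))) has_integral (exp ((1/2) * s + (-s/2)) - exp ((1/2) * 0 + (-s/2))) / (1/2)) {0..s}"
      by (rule exp_hasint) (use True in auto)
    then have "((\<lambda>u. exp ((1/2) * u + (-s/2)) / 2) has_integral ((exp ((1/2) * s + (-s/2)) - exp ((1/2) * 0 + (-s/2))) / (1/2)) / 2) {0..s}"
      by (rule has_integral_divide)
    moreover have e1: "(\<lambda>u. exp ((1/2) * u + (-s/2)) / 2) = (\<lambda>u. exp (-(s-u)/2) / 2)"
      by (rule ext) (simp add: algebra_simps)
    moreover have e2: "((exp ((1/2) * s + (-s/2)) - exp ((1/2) * 0 + (-s/2))) / (1/2)) / 2 = 1 - exp (-s/2)"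
      by simp
    ultimately show "((\<lambda>u. exp (-(s-u)/2) / 2) has_integral 1 - exp (-s/2)) {0..s}" by (simp only:)
  qed simp
  also have "\<dots> \<le> 1" by (simp add: ennreal_le_1)
  finally show ?thesis .
qed


theorem lemma2p6:
  fixes M :: "'a measure" and H :: real and \<sigma> :: "real ^ 'n ^ 'n"
    and B Z :: "real \<Rightarrow> 'a \<Rightarrow> real ^ 'n"
  assumes "0 < H" and "H < 1"
    and "is_fbm M H B"
    and "\<forall>\<omega>\<in>space M. continuous_on {0..} (\<lambda>t. Z t \<omega>)"
    and "\<forall>\<omega>\<in>space M. \<forall>t\<ge>0. Z t \<omega> = \<sigma> *v B t \<omega> - integral {0..t} (\<lambda>s. Z s \<omega>)"
  shows "\<forall>\<kappa>>0. \<exists>c>0. \<exists>C>0. \<forall>z::real ^ 'n. \<forall>T\<ge>0.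
           measure M {\<omega> \<in> space M. N_norm \<kappa> T (\<lambda>s. Z s \<omega>) > norm z} \<le> C * exp (- c * (norm z)\<^sup>2)"
proof (intro allI impI)
  fix \<kappa> :: real assume \<kappa>: "\<kappa> > 0"
  note fbm = assms(3)
  have P: "prob_space M" using fbm unfolding is_fbm_def by blast
  interpret prob_space M by (rule P)
  have Bc: "continuous_on {0..} (\<lambda>t. B t \<omega>)" if "\<omega> \<in> space M" for \<omega>
    using fbm that unfolding is_fbm_def by blast
  obtain K0 where K0: "K0 > 0" "\<And>x. norm (\<sigma> *v x) \<le> norm x * K0"
    using bounded_linear.pos_bounded[OF matrix_vector_mul_bounded_linear[of \<sigma>]] by blast
  define K where "K = K0"
  have K: "K > 0" "\<And>x. norm (\<sigma> *v x) \<le> K * norm x" using K0 unfolding K_def by (auto simp: mult.commute)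
  define n where "n = real CARD('n)"
  have n1: "n \<ge> 1" unfolding n_def by simp
  define c0 where "c0 = min \<kappa> 1 / (64 * n)"
  have c0: "c0 > 0" unfolding c0_def using \<kappa> n1 by simp
  have cA: "real CARD('n) * c0 * 2 \<le> 1/4"
  proof -
    have "c0 \<le> 1 / (64 * n)" unfolding c0_def using n1 by (intro divide_right_mono) auto
    then have "n * c0 \<le> n * (1 / (64 * n))" using n1 by (intro mult_left_mono) auto
    then show ?thesis using n1 unfolding n_def[symmetric] by simp
  qed
  have cB: "real CARD('n) * (2*c0/\<kappa>) * 8 \<le> 1/4"
  proof -
    have "c0 \<le> \<kappa> / (64 * n)" unfolding c0_def using n1 by (intro divide_right_mono) auto
    then have "n * c0 \<le> n * (\<kappa> / (64 * n))" using n1 by (intro mult_left_mono) auto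
    then have "n * c0 / \<kappa> \<le> 1/64" using n1 \<kappa> by (simp add: field_simps)
    then show ?thesis using n1 unfolding n_def[symmetric] by (simp add: field_simps)
  qed
  define Bj where "Bj p = B (max 0 (fst p)) (snd p)" for p
  have Bjm[measurable]: "Bj \<in> borel_measurable (lborel \<Otimes>\<^sub>M M)"
    unfolding Bj_def by (rule joint_meas[OF fbm])
  show "\<exists>c>0. \<exists>C>0. \<forall>z::real ^ 'n. \<forall>T\<ge>0.
           measure M {\<omega> \<in> space M. N_norm \<kappa> T (\<lambda>s. Z s \<omega>) > norm z} \<le> C * exp (- c * (norm z)\<^sup>2)"
  proof (intro exI conjI allI impI)
    show "c0 / (4 * K\<^sup>2) > 0" using c0 K by simp
    show "(exp 1 + 2 * n) + (exp 1 + (exp 1 + 2 * n)) > 0" using n1 by (simp add: add_pos_pos)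
    fix z :: "real^'n" and T :: real assume T: "T \<ge> 0"
    show "measure M {\<omega> \<in> space M. N_norm \<kappa> T (\<lambda>s. Z s \<omega>) > norm z}
        \<le> ((exp 1 + 2 * n) + (exp 1 + (exp 1 + 2 * n))) * exp (- (c0 / (4 * K\<^sup>2)) * (norm z)\<^sup>2)"
    proof -
      define q1 where "q1 s = indicator {0..T} s * exp (-\<kappa>*(T-s)) * exp (-s)" for s :: real
      define f1 where "f1 s \<omega> = ennreal (c0 * exp (-s) * (norm (Bj (s,\<omega>)))\<^sup>2)" for s \<omega>
      define q2 where "q2 s = \<kappa> * indicator {0..T} s * exp (-\<kappa>*(T-s))" for s :: real
      define p where "p s u = indicator {0..s} u * exp (-(s-u)/2) / 2" for s u :: real
      define g where "g s u \<omega> = ennreal (2*c0/\<kappa> * exp (-\<bar>s-u\<bar>/2) * (norm (Bj (s,\<omega>) - Bj (u,\<omega>)))\<^sup>2)" for s u \<omega>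
      define f2 where "f2 s \<omega> = (\<integral>\<^sup>+u. ennreal (p s u) * g s u \<omega> \<partial>lborel)" for s \<omega>
      define HA where "HA \<omega> = (\<integral>\<^sup>+s. ennreal (q1 s) * f1 s \<omega> \<partial>lborel)" for \<omega>
      define HB where "HB \<omega> = (\<integral>\<^sup>+s. ennreal (q2 s) * f2 s \<omega> \<partial>lborel)" for \<omega>
      have q1m[measurable]: "q1 \<in> borel_measurable borel" unfolding q1_def by measurable
      have q2m[measurable]: "q2 \<in> borel_measurable borel" unfolding q2_def by measurable
      have pm[measurable]: "p s \<in> borel_measurable borel" for s unfolding p_def by measurable
      have f1m: "(\<lambda>x. f1 (fst x) (snd x)) \<in> borel_measurable (lborel \<Otimes>\<^sub>M M)" unfolding f1_def by measurable
      have gm: "(\<lambda>x. g s (fst x) (snd x)) \<in> borel_measurable (lborel \<Otimes>\<^sub>M M)" for s unfolding g_def by measurable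
      have f2m: "(\<lambda>x. f2 (fst x) (snd x)) \<in> borel_measurable (lborel \<Otimes>\<^sub>M M)"
        unfolding f2_def p_def g_def by measurable
      have HAm[measurable]: "HA \<in> borel_measurable M" unfolding HA_def q1_def f1_def by measurable
      have HBm[measurable]: "HB \<in> borel_measurable M" unfolding HB_def q2_def f2_def p_def g_def by measurable
      have EA: "(\<integral>\<^sup>+\<omega>. EE (HA \<omega>) \<partial>M) \<le> ennreal (exp 1) + ennreal (2 * n)"
        unfolding HA_def
      proof (rule J[OF P q1m _ _ f1m])
        show "0 \<le> q1 x" for x unfolding q1_def by simp
        show "(\<integral>\<^sup>+x. ennreal (q1 x) \<partial>lborel) \<le> 1" unfolding q1_def by (rule mass1[OF T \<kappa>])
        show "(\<integral>\<^sup>+\<omega>. EE (f1 x \<omega>) \<partial>M) \<le> ennreal (2 * n)" for x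
          unfolding f1_def Bj_def n_def using momA[OF fbm assms(1,2) _ cA] c0 by simp
      qed
      have Ef2: "(\<integral>\<^sup>+\<omega>. EE (f2 s \<omega>) \<partial>M) \<le> ennreal (exp 1) + ennreal (2 * n)" for s
        unfolding f2_def
      proof (rule J[OF P pm _ _ gm])
        show "0 \<le> p s x" for x unfolding p_def by simp
        show "(\<integral>\<^sup>+x. ennreal (p s x) \<partial>lborel) \<le> 1" unfolding p_def by (rule mass3)
        show "(\<integral>\<^sup>+\<omega>. EE (g s x \<omega>) \<partial>M) \<le> ennreal (2 * n)" for x
          unfolding g_def Bj_def n_def using momB[OF fbm assms(1,2) _ \<kappa> cB] c0 by simp
      qed
      have EB: "(\<integral>\<^sup>+\<omega>. EE (HB \<omega>) \<partial>M) \<le> ennreal (exp 1) + (ennreal (exp 1) + ennreal (2 * n))"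
        unfolding HB_def
      proof (rule J[OF P q2m _ _ f2m])
        show "0 \<le> q2 x" for x unfolding q2_def using \<kappa> by simp
        show "(\<integral>\<^sup>+x. ennreal (q2 x) \<partial>lborel) \<le> 1" unfolding q2_def by (rule mass2[OF T \<kappa>])
        show "(\<integral>\<^sup>+\<omega>. EE (f2 x \<omega>) \<partial>M) \<le> ennreal (exp 1) + ennreal (2 * n)" for x
          by (rule Ef2)
      qed
      have path: "ennreal (c0 / (2*K\<^sup>2) * (N_norm \<kappa> T (\<lambda>s. Z s \<omega>))\<^sup>2) \<le> HA \<omega> + HB \<omega>"
        if w: "\<omega> \<in> space M" for \<omega>
      proof -
        have "ennreal (c0 / (2*K\<^sup>2) * (N_norm \<kappa> T (\<lambda>s. Z s \<omega>))\<^sup>2) \<le>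
          (\<integral>\<^sup>+s. ennreal (indicator {0..T} s * exp (-\<kappa>*(T-s)) * exp (-s)) * ennreal (c0 * exp (-s) * (norm ((\<lambda>t. B t \<omega>) (max 0 s)))\<^sup>2) \<partial>lborel) +
          (\<integral>\<^sup>+s. ennreal (\<kappa> * indicator {0..T} s * exp (-\<kappa>*(T-s))) *
            (\<integral>\<^sup>+u. ennreal (indicator {0..s} u * exp (-(s-u)/2) / 2) * ennreal (2*c0/\<kappa> * exp (-\<bar>s-u\<bar>/2) * (norm ((\<lambda>t. B t \<omega>) (max 0 s) - (\<lambda>t. B t \<omega>) (max 0 u)))\<^sup>2) \<partial>lborel) \<partial>lborel)"
          by (rule pathwise[OF bspec[OF assms(4) w] Bc[OF w] bspec[OF assms(5) w] K T \<kappa> c0])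
        then show ?thesis unfolding HA_def HB_def q1_def q2_def f1_def f2_def p_def g_def Bj_def by simp
      qed
      define r where "r = norm z"
      define c where "c = c0 / (4 * K\<^sup>2)"
      define CC where "CC = (exp 1 + 2 * n) + (exp 1 + (exp 1 + 2 * n))"
      define S where "S = {\<omega> \<in> space M. N_norm \<kappa> T (\<lambda>s. Z s \<omega>) > norm z}"
      define A where "A = {\<omega> \<in> space M. 1 \<le> ennreal (exp (-(c*r\<^sup>2))) * (EE (HA \<omega>) + EE (HB \<omega>))}"
      have r0: "r \<ge> 0" unfolding r_def by simp
      have c0': "c \<ge> 0" unfolding c_def using c0 by simp
      have CC0: "CC \<ge> 0" unfolding CC_def using n1 by simp
      have Asub: "S \<subseteq> A"
      proof
        fix \<omega> assume "\<omega> \<in> S"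
        then have w: "\<omega> \<in> space M" and gt: "N_norm \<kappa> T (\<lambda>s. Z s \<omega>) > r" unfolding S_def r_def by auto
        have "r\<^sup>2 \<le> (N_norm \<kappa> T (\<lambda>s. Z s \<omega>))\<^sup>2" using gt r0 by (intro power_mono) auto
        then have "2 * (c * r\<^sup>2) \<le> c0 / (2*K\<^sup>2) * (N_norm \<kappa> T (\<lambda>s. Z s \<omega>))\<^sup>2"
          unfolding c_def using c0 K by (simp add: field_simps)
        then have "ennreal (2 * (c * r\<^sup>2)) \<le> ennreal (c0 / (2*K\<^sup>2) * (N_norm \<kappa> T (\<lambda>s. Z s \<omega>))\<^sup>2)"
          by (rule ennreal_leI)
        also have "\<dots> \<le> HA \<omega> + HB \<omega>" by (rule path[OF w])
        also have "\<dots> \<le> 2 * max (HA \<omega>) (HB \<omega>)" unfolding mult_2 by (intro add_mono) auto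
        finally have "2 * ennreal (c * r\<^sup>2) \<le> 2 * max (HA \<omega>) (HB \<omega>)"
          using c0' by (simp add: ennreal_mult)
        then have le: "ennreal (c * r\<^sup>2) \<le> max (HA \<omega>) (HB \<omega>)"
          by (subst (asm) ennreal_mult_le_mult_iff) auto
        have "ennreal (exp (c * r\<^sup>2)) = EE (ennreal (c * r\<^sup>2))" using c0' by simp
        also have "\<dots> \<le> EE (max (HA \<omega>) (HB \<omega>))" by (rule EE_mono[OF le])
        also have "\<dots> \<le> EE (HA \<omega>) + EE (HB \<omega>)"
          by (cases "HA \<omega> \<le> HB \<omega>") (simp_all add: max_def add_increasing add_increasing2)
        finally have "ennreal (exp (-(c*r\<^sup>2))) * ennreal (exp (c * r\<^sup>2)) \<le> ennreal (exp (-(c*r\<^sup>2))) * (EE (HA \<omega>) + EE (HB \<omega>))"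
          by (rule mult_left_mono) simp
        moreover have "ennreal (exp (-(c*r\<^sup>2))) * ennreal (exp (c * r\<^sup>2)) = 1"
          by (simp flip: ennreal_mult exp_add)
        ultimately show "\<omega> \<in> A" unfolding A_def using w by simp
      qed
      have Am: "A \<in> sets M" unfolding A_def by measurable
      have Mk: "emeasure M A \<le> ennreal (exp (-(c*r\<^sup>2))) * (\<integral>\<^sup>+\<omega>. (EE (HA \<omega>) + EE (HB \<omega>)) * indicator (space M) \<omega> \<partial>M)"
        unfolding A_def by (rule nn_integral_Markov_inequality) auto
      have "(\<integral>\<^sup>+\<omega>. (EE (HA \<omega>) + EE (HB \<omega>)) * indicator (space M) \<omega> \<partial>M) = (\<integral>\<^sup>+\<omega>. EE (HA \<omega>) + EE (HB \<omega>) \<partial>M)"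
        by (rule nn_integral_cong) simp
      also have "\<dots> = (\<integral>\<^sup>+\<omega>. EE (HA \<omega>) \<partial>M) + (\<integral>\<^sup>+\<omega>. EE (HB \<omega>) \<partial>M)"
        by (rule nn_integral_add) auto
      also have "\<dots> \<le> (ennreal (exp 1) + ennreal (2 * n)) + (ennreal (exp 1) + (ennreal (exp 1) + ennreal (2 * n)))"
        by (rule add_mono[OF EA EB])
      also have "\<dots> = ennreal CC" unfolding CC_def using n1 by (simp add: ennreal_plus[symmetric] del: ennreal_plus)
      finally have Ib: "(\<integral>\<^sup>+\<omega>. (EE (HA \<omega>) + EE (HB \<omega>)) * indicator (space M) \<omega> \<partial>M) \<le> ennreal CC" .
      have "ennreal (exp (-(c*r\<^sup>2))) * ennreal CC = ennreal (CC * exp (-(c*r\<^sup>2)))"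
        using CC0 by (simp add: ennreal_mult[symmetric] mult.commute)
      then have eA: "emeasure M A \<le> ennreal (CC * exp (-(c*r\<^sup>2)))"
        using order_trans[OF Mk mult_left_mono[OF Ib]] by simp
      have mA: "measure M A \<le> CC * exp (-(c*r\<^sup>2))"
        using eA CC0 by (simp add: emeasure_eq_measure ennreal_le_iff)
      have "measure M S \<le> CC * exp (-(c*r\<^sup>2))"
      proof (cases "S \<in> sets M")
        case True
        then have "measure M S \<le> measure M A" by (intro finite_measure_mono Asub Am)
        then show ?thesis using mA by simp
      next
        case False
        then show ?thesis using CC0 by (simp add: measure_notin_sets)
      qed
      then show ?thesis unfolding S_def CC_def c_def r_def by simp
    qed
  qed
qed

end
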